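(* Let $M,N\in su(1,1)$ be linearly independent and suppose that the set $\{u\in\mathbb{R}\mid \langle M+uN,\,M^{\dagger}+uN^{\dagger}\rangle<0\}$ is nonempty. Then $M$, $N$ and $[M,N]=MN-NM$ form a basis of $su(1,1)$ (as a real vector space).
   Context: $su(1,1)$ denotes the three-dimensional real Lie algebra of $2\times 2$ complex matrices spanned over $\mathbb{R}$ by $K_x=\frac12\begin{pmatrix}0&-i\\ i&0\end{pmatrix}$, $K_y=\frac12\begin{pmatrix}0&-1\\-1&0\end{pmatrix}$, $K_z=\frac12\begin{pmatrix}-i&0\\0&i\end{pmatrix}$. For matrices $M,N$ the inner product is $\langle M,N\rangle=2\,\mathrm{Tr}(MN^{\dagger})$, where $N^{\dagger}$ is the conjugate transpose of $N$. *)

theory Defs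
  imports "HOL-Analysis.Analysis"
begin

type_synonym cmat2 = "complex^2^2"

definition Kx :: cmat2 where
  "Kx = vector [vector [0, - \<i>/2], vector [\<i>/2, 0]]"
definition Ky :: cmat2 where
  "Ky = vector [vector [0, -1/2], vector [-1/2, 0]]"
definition Kz :: cmat2 where
  "Kz = vector [vector [- \<i>/2, 0], vector [0, \<i>/2]]"

text \<open>su(1,1): the real span of Kx, Ky, Kz (span = real span, matrices as a real vector space).\<close>
definition su11 :: "cmat2 set" where
  "su11 = span {Kx, Ky, Kz}"

definition adj :: "cmat2 \<Rightarrow> cmat2" where
  "adj A = (\<chi> i j. cnj (A $ j $ i))"

definition ip :: "cmat2 \<Rightarrow> cmat2 \<Rightarrow> complex" where
  "ip M N = 2 * trace (M ** adj N)"

definition comm :: "cmat2 \<Rightarrow> cmat2 \<Rightarrow> cmat2" where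
  "comm M N = M ** N - N ** M"

end

theory Submission
  imports Defs
begin
definition cf :: "real \<Rightarrow> real \<Rightarrow> real \<Rightarrow> cmat2" where
  "cf a b c = a *\<^sub>R Kx + b *\<^sub>R Ky + c *\<^sub>R Kz"

lemma ent: "cf a b c $ 1 $ 1 = - \<i> * c / 2" "cf a b c $ 1 $ 2 = - \<i> * a / 2 - b/2"
  "cf a b c $ 2 $ 1 = \<i> * a / 2 - b/2" "cf a b c $ 2 $ 2 = \<i> * c / 2"
  by (simp_all add: cf_def Kx_def Ky_def Kz_def, simp_all add: scaleR_conv_of_real field_simps)

lemma comm_cf: "comm (cf a1 b1 c1) (cf a2 b2 c2) = cf (b1*c2-c1*b2) (c1*a2-a1*c2) (b1*a2-a1*b2)"
  unfolding comm_def
  apply (simp add: vec_eq_iff forall_2 matrix_matrix_mult_def sum_2 ent)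
  apply (simp add: algebra_simps complex_eq_iff field_simps)
  done

lemma adj_adj: "adj (adj X) = X" by (simp add: adj_def vec_eq_iff)
lemma adj_lin: "adj X + u *\<^sub>R adj Y = adj (X + u *\<^sub>R Y)" by (simp add: adj_def vec_eq_iff)
lemma cf_lin: "cf a1 b1 c1 + u *\<^sub>R cf a2 b2 c2 = cf (a1+u*a2) (b1+u*b2) (c1+u*c2)"
  by (simp add: cf_def algebra_simps)

lemma ip_cf: "ip (cf a b c) (adj (cf a b c)) = complex_of_real (a^2+b^2-c^2)"
  unfolding ip_def adj_adj
  apply (simp add: matrix_matrix_mult_def sum_2 ent trace_def)
  apply (simp add: algebra_simps complex_eq_iff power2_eq_square field_simps)
  done

lemma cf_inj: "cf a b c = cf a' b' c' \<Longrightarrow> a = a' \<and> b = b' \<and> c = c'"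
proof -
  assume h: "cf a b c = cf a' b' c'"
  have "cf a b c $ 1 $ 1 = cf a' b' c' $ 1 $ 1" "cf a b c $ 1 $ 2 = cf a' b' c' $ 1 $ 2"
     "cf a b c $ 2 $ 1 = cf a' b' c' $ 2 $ 1" using h by auto
  then show ?thesis by (simp add: ent complex_eq_iff)
qed

lemma su11_eq: "su11 = range (\<lambda>(a,b,c). cf a b c)"
  unfolding su11_def
  apply (simp add: span_insert span_empty cf_def set_eq_iff)
proof (intro allI iffI)
  fix x assume "\<exists>k ka kb. x - k *\<^sub>R Kx - ka *\<^sub>R Ky = kb *\<^sub>R Kz"
  then obtain k ka kb where "x - k *\<^sub>R Kx - ka *\<^sub>R Ky = kb *\<^sub>R Kz" by blast
  then have "x = (\<lambda>(a,b,c). a *\<^sub>R Kx + b *\<^sub>R Ky + c *\<^sub>R Kz) (k,ka,kb)"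
    by (simp add: algebra_simps eq_diff_eq)
  then show "x \<in> range (\<lambda>(a, b, c). a *\<^sub>R Kx + b *\<^sub>R Ky + c *\<^sub>R Kz)" by blast
next
  fix x assume "x \<in> range (\<lambda>(a, b, c). a *\<^sub>R Kx + b *\<^sub>R Ky + c *\<^sub>R Kz)"
  then obtain k ka kb where "x = k *\<^sub>R Kx + ka *\<^sub>R Ky + kb *\<^sub>R Kz" by auto
  then show "\<exists>k ka kb. x - k *\<^sub>R Kx - ka *\<^sub>R Ky = kb *\<^sub>R Kz"
    by (intro exI[of _ k] exI[of _ ka] exI[of _ kb]) simp
qed

lemma cf_in: "cf a b c \<in> su11" unfolding su11_eq
  using rangeI[of "\<lambda>(a,b,c). cf a b c" "(a,b,c)"] by simp

lemma cf_comb3: "x *\<^sub>R cf a1 b1 c1 + y *\<^sub>R cf a2 b2 c2 + z *\<^sub>R cf a3 b3 c3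
   = cf (x*a1+y*a2+z*a3) (x*b1+y*b2+z*b3) (x*c1+y*c2+z*c3)"
  by (simp add: cf_def algebra_simps)

lemma cf_zero: "cf 0 0 0 = 0" by (simp add: cf_def)

lemma cf_scale: "s *\<^sub>R cf a b c = cf (s*a) (s*b) (s*c)" by (simp add: cf_def algebra_simps)

lemma realpart:
  fixes A B C p q r :: real
  assumes h: "A^2 + B^2 - C^2 < 0" and e: "C * r = A * p + B * q"
    and nz: "\<not> (p = 0 \<and> q = 0 \<and> r = 0)"
  shows "p^2 + q^2 - r^2 > 0"
proof -
  have C2: "C^2 > 0" using h by (smt (verit) zero_le_power2)
  have cs: "(A*p + B*q)^2 \<le> (A^2+B^2)*(p^2+q^2)"
  proof -
    have "(A*p+B*q)^2 + (A*q - B*p)^2 = (A^2+B^2)*(p^2+q^2)" by (simp add: power2_eq_square algebra_simps)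
    then show ?thesis by (smt (verit) zero_le_power2)
  qed
  show ?thesis
  proof (cases "p^2+q^2 > 0")
    case True
    have "(A^2+B^2)*(p^2+q^2) < C^2*(p^2+q^2)" using True h by (simp add: mult_strict_right_mono)
    with cs e have "C^2 * r^2 < C^2 * (p^2+q^2)" by (simp add: power_mult_distrib[symmetric])
    then have "r^2 < p^2+q^2" using C2 by simp
    then show ?thesis by simp
  next
    case False
    then have "p = 0" "q = 0" by (smt (verit) zero_le_power2 power2_less_0 power_zero_numeral sum_power2_eq_zero_iff)+
    with e C2 have "r = 0" by simp
    with nz \<open>p=0\<close> \<open>q=0\<close> show ?thesis by simp
  qed
qed

theorem lemma3p2:
  fixes M N :: cmat2
  assumes "M \<in> su11" and "N \<in> su11"
    and "M \<noteq> N" and "independent {M, N}"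
    and "\<exists>u::real. Im (ip (M + u *\<^sub>R N) (adj M + u *\<^sub>R adj N)) = 0
                  \<and> Re (ip (M + u *\<^sub>R N) (adj M + u *\<^sub>R adj N)) < 0"
  shows "comm M N \<in> su11 \<and> card {M, N, comm M N} = 3
         \<and> independent {M, N, comm M N} \<and> span {M, N, comm M N} = su11"
proof -
  obtain a1 b1 c1 where M: "M = cf a1 b1 c1" using assms(1) unfolding su11_eq by auto
  obtain a2 b2 c2 where N: "N = cf a2 b2 c2" using assms(2) unfolding su11_eq by auto
  obtain u where u: "Re (ip (M + u *\<^sub>R N) (adj M + u *\<^sub>R adj N)) < 0" using assms(5) by blast
  define A where "A = a1 + u*a2"
  define B where "B = b1 + u*b2"
  define C where "C = c1 + u*c2"
  have MuN: "M + u *\<^sub>R N = cf A B C" unfolding M N A_def B_def C_def by (rule cf_lin)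
  have neg: "A^2 + B^2 - C^2 < 0" using u unfolding adj_lin MuN ip_cf by simp
  define p where "p = b1*c2-c1*b2"
  define q where "q = c1*a2-a1*c2"
  define r where "r = b1*a2-a1*b2"
  define W where "W = cf p q r"
  have W: "comm M N = W" unfolding M N W_def p_def q_def r_def comm_cf ..
  have e: "C * r = A * p + B * q" unfolding A_def B_def C_def p_def q_def r_def
    by (simp add: algebra_simps)
  have nz: "\<not> (p = 0 \<and> q = 0 \<and> r = 0)"
  proof
    assume z: "p = 0 \<and> q = 0 \<and> r = 0"
    have C0: "C \<noteq> 0" using neg by (smt (verit) zero_le_power2 power_zero_numeral)
    define s where "s = c2 / C"
    have p': "B*c2 - C*b2 = 0" using z unfolding p_def B_def C_def by (simp add: algebra_simps)
    have q': "C*a2 - A*c2 = 0" using z unfolding q_def A_def C_def by (simp add: algebra_simps)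
    have "a2 = s*A" "b2 = s*B" "c2 = s*C" using p' q' C0 unfolding s_def by (auto simp: field_simps)
    then have "N = cf (s*A) (s*B) (s*C)" unfolding N by simp
    then have Ns: "N = s *\<^sub>R (M + u *\<^sub>R N)" unfolding MuN cf_scale .
    show False
    proof (cases "s*u = 1")
      case True
      then have "s *\<^sub>R M = 0" using Ns by (simp add: algebra_simps)
      moreover have "s \<noteq> 0" using True by auto
      ultimately have "M = 0" by simp
      then show False using assms(4) dependent_zero by blast
    next
      case False
      have "(1 - s*u) *\<^sub>R N = s *\<^sub>R M" using Ns by (simp add: algebra_simps)
      then have "(1 / (1 - s*u)) *\<^sub>R ((1 - s*u) *\<^sub>R N) = (1 / (1 - s*u)) *\<^sub>R (s *\<^sub>R M)"
        by simp
      then have "N = (s / (1 - s*u)) *\<^sub>R M" using False by simp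
      then have "N \<in> span ({M,N} - {N})" using assms(3) by (simp add: span_base span_scale)
      then show False using assms(4) unfolding dependent_def by blast
    qed
  qed
  have Dpos: "p^2 + q^2 - r^2 > 0" using realpart[OF neg e nz] .
  have id1: "a1*p + b1*q - c1*r = 0" unfolding p_def q_def r_def by (simp add: algebra_simps)
  have id2: "a2*p + b2*q - c2*r = 0" unfolding p_def q_def r_def by (simp add: algebra_simps)
  have WM: "W \<noteq> M"
  proof
    assume "W = M"
    then have "p = a1" "q = b1" "r = c1" using cf_inj unfolding W_def M by blast+
    then show False using id1 Dpos by (simp add: power2_eq_square)
  qed
  have WN: "W \<noteq> N"
  proof
    assume "W = N"
    then have "p = a2" "q = b2" "r = c2" using cf_inj unfolding W_def N by blast+
    then show False using id2 Dpos by (simp add: power2_eq_square)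
  qed
  have card: "card {M, N, W} = 3" using WM WN assms(3) by auto
  have indep: "independent {M, N, W}"
  proof
    assume "dependent {M, N, W}"
    then obtain f where f: "\<exists>v\<in>{M,N,W}. f v \<noteq> 0" "(\<Sum>v\<in>{M,N,W}. f v *\<^sub>R v) = 0"
      using dependent_finite[of "{M,N,W}"] by auto
    define x where "x = f M"
    define y where "y = f N"
    define z where "z = f W"
    have "x *\<^sub>R M + y *\<^sub>R N + z *\<^sub>R W = 0" using f(2) WM WN assms(3)
      unfolding x_def y_def z_def by (simp add: algebra_simps)
    then have "cf (x*a1+y*a2+z*p) (x*b1+y*b2+z*q) (x*c1+y*c2+z*r) = cf 0 0 0"
      unfolding M N W_def cf_comb3 cf_zero .
    then have E: "x*a1+y*a2+z*p = 0" "x*b1+y*b2+z*q = 0" "x*c1+y*c2+z*r = 0"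
      using cf_inj by blast+
    have "z * (p^2+q^2-r^2) = p*(x*a1+y*a2+z*p) + q*(x*b1+y*b2+z*q) - r*(x*c1+y*c2+z*r)
       - x*(a1*p + b1*q - c1*r) - y*(a2*p + b2*q - c2*r)"
      by (simp add: algebra_simps power2_eq_square)
    then have "z * (p^2+q^2-r^2) = 0" using E id1 id2 by simp
    then have z0: "z = 0" using Dpos by simp
    have "x*p = c2*(x*b1+y*b2) - b2*(x*c1+y*c2)" "x*q = a2*(x*c1+y*c2) - c2*(x*a1+y*a2)"
         "x*r = a2*(x*b1+y*b2) - b2*(x*a1+y*a2)"
      unfolding p_def q_def r_def by (simp_all add: algebra_simps)
    then have "x*p = 0" "x*q = 0" "x*r = 0" using E z0 by simp_all
    then have x0: "x = 0" using nz by auto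
    have "y*p = a1*0 + 0" "y*q = 0" "y*r = 0"
      using E z0 x0 unfolding p_def q_def r_def
      by (simp_all add: algebra_simps) (metis mult.assoc mult.commute mult_zero_left)+
    then have y0: "y = 0" using nz by auto
    show False using f(1) x0 y0 z0 unfolding x_def y_def z_def by auto
  qed
  have sub: "{M, N, W} \<subseteq> su11" using cf_in unfolding M N W_def by auto
  have dimle: "dim su11 \<le> card {M, N, W}"
  proof -
    have "dim su11 \<le> card {Kx, Ky, Kz}" unfolding su11_def by (rule dim_le_card) auto
    also have "\<dots> \<le> 3" by (simp add: card_insert_le_m1)
    finally show ?thesis using card by simp
  qed
  have "su11 \<subseteq> span {M, N, W}" by (rule card_ge_dim_independent[OF sub indep dimle])
  moreover have "span {M, N, W} \<subseteq> su11" using sub unfolding su11_def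
    by (simp add: span_minimal)
  ultimately have "span {M, N, W} = su11" by blast
  then show ?thesis using W card indep cf_in unfolding W_def by simp
qed
end
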